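(* Let $n\ge 1$, $d\ge 1$ and $R=\mathbb{C}[x_0,\dots,x_n]$. A tuple $(f_{ij}: 0\le i<j\le n)\in R_d^{\binom{n+1}{2}}$ is the tuple of determinantal equations of the eigenscheme of a partially symmetric tensor, i.e. there exist $g_0,\dots,g_n\in R_{d-1}$ with $f_{ij}=x_ig_j-x_jg_i$ for all $0\le i<j\le n$, if and only if $$x_if_{jk}-x_jf_{ik}+x_kf_{ij}=0\quad\text{for every }0\le i<j<k\le n.$$
   Context: A partially symmetric tensor is identified with a tuple $T=(g_0,\dots,g_n)$ of homogeneous polynomials $g_i\in\mathbb{C}[x_0,\dots,x_n]_{d-1}$; the determinantal equations of its eigenscheme $E(T)$ are the $2\times 2$ minors $x_ig_j-x_jg_i$ ($0\le i<j\le n$) of the matrix $\begin{pmatrix} x_0&\dots&x_n\\ g_0&\dots&g_n\end{pmatrix}$. *)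

theory Defs
  imports Complex_Main "HOL-Library.Poly_Mapping"
begin

text \<open>Multivariate polynomials over the complex numbers: finitely supported maps from
  monomials (exponent vectors, finitely supported maps nat to nat) to coefficients.\<close>

type_synonym mpoly = "(nat \<Rightarrow>\<^sub>0 nat) \<Rightarrow>\<^sub>0 complex"

definition Var :: "nat \<Rightarrow> mpoly" where
  "Var i = Poly_Mapping.single (Poly_Mapping.single i 1) 1"

definition mon_deg :: "(nat \<Rightarrow>\<^sub>0 nat) \<Rightarrow> nat" where
  "mon_deg m = (\<Sum>i\<in>Poly_Mapping.keys m. Poly_Mapping.lookup m i)"

text \<open>R_d for R = C[x_0,...,x_n]: homogeneous polynomials of degree d in the variables
  x_0,...,x_n (the zero polynomial included).\<close>
definition hom_comp :: "nat \<Rightarrow> nat \<Rightarrow> mpoly set" where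
  "hom_comp n d = {p. \<forall>m\<in>Poly_Mapping.keys p. Poly_Mapping.keys m \<subseteq> {0..n} \<and> mon_deg m = d}"

end

theory Submission imports Defs begin

abbreviation e :: "nat \<Rightarrow> (nat \<Rightarrow>\<^sub>0 nat)" where "e k \<equiv> Poly_Mapping.single k (Suc 0)"

lemma mon_decomp:
  "(m = e k + q) \<longleftrightarrow> (1 \<le> Poly_Mapping.lookup m k \<and> q = m - e k)"
proof
  assume "m = e k + q" then show "1 \<le> Poly_Mapping.lookup m k \<and> q = m - e k"
    by (auto simp: lookup_add lookup_single)
next
  assume a: "1 \<le> Poly_Mapping.lookup m k \<and> q = m - e k"
  show "m = e k + q"
    by (rule poly_mapping_eqI) (use a in \<open>auto simp: lookup_add lookup_minus lookup_single when_def\<close>)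
qed

lemma lookup_Var_mult:
  "Poly_Mapping.lookup (Var k * p) m = (if 1 \<le> Poly_Mapping.lookup m k then Poly_Mapping.lookup p (m - e k) else 0)"
proof -
  have "Poly_Mapping.lookup (Var k * p) m = (\<Sum>q. Poly_Mapping.lookup p q when m = e k + q)"
    unfolding Var_def lookup_mult by (simp add: lookup_single when_mult)
  also have "\<dots> = (\<Sum>q. Poly_Mapping.lookup p q when (1 \<le> Poly_Mapping.lookup m k \<and> q = m - e k))"
    by (simp only: mon_decomp)
  also have "\<dots> = (if 1 \<le> Poly_Mapping.lookup m k then Poly_Mapping.lookup p (m - e k) else 0)"
    by (cases "1 \<le> Poly_Mapping.lookup m k") (simp_all add: when_def)
  finally show ?thesis .
qed


abbreviation lk where "lk \<equiv> Poly_Mapping.lookup"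

definition pd :: "nat \<Rightarrow> mpoly \<Rightarrow> mpoly" where
  "pd k p = Abs_poly_mapping (\<lambda>m. of_nat (lk m k + 1) * lk p (m + e k))"

lemma lookup_pd: "lk (pd k p) m = of_nat (lk m k + 1) * lk p (m + e k)"
proof -
  have "{m. of_nat (lk m k + 1) * lk p (m + e k) \<noteq> (0::complex)} \<subseteq> (\<lambda>q. q - e k) ` {q. lk p q \<noteq> 0}"
  proof
    fix m assume "m \<in> {m. of_nat (lk m k + 1) * lk p (m + e k) \<noteq> (0::complex)}"
    then have "lk p (m + e k) \<noteq> 0" by auto
    moreover have "m = (m + e k) - e k" by simp
    ultimately show "m \<in> (\<lambda>q. q - e k) ` {q. lk p q \<noteq> 0}" by blast
  qed
  moreover have "finite ((\<lambda>q. q - e k) ` {q. lk p q \<noteq> 0})" by simp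
  ultimately have "finite {m. of_nat (lk m k + 1) * lk p (m + e k) \<noteq> (0::complex)}"
    by (rule finite_subset)
  then show ?thesis unfolding pd_def by simp
qed

lemma pd_add: "pd k (p + q) = pd k p + pd k q"
  by (rule poly_mapping_eqI) (simp add: lookup_pd lookup_add algebra_simps)
lemma pd_diff: "pd k (p - q) = pd k p - pd k q"
  by (rule poly_mapping_eqI) (simp add: lookup_pd lookup_minus algebra_simps)
lemma pd_uminus: "pd k (- p) = - pd k p"
  by (rule poly_mapping_eqI) (simp add: lookup_pd)
lemma pd_zero: "pd k 0 = 0"
  by (rule poly_mapping_eqI) (simp add: lookup_pd)

lemma sub_add_e: "Suc 0 \<le> lk m k \<Longrightarrow> m - e k + e k = m"
  by (rule poly_mapping_eqI) (auto simp: lookup_add lookup_single lookup_minus when_def)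
lemma sub_add_e': "Suc 0 \<le> lk m k \<Longrightarrow> e k + (m - e k) = m"
  by (rule poly_mapping_eqI) (auto simp: lookup_add lookup_single lookup_minus when_def)

lemma pd_Var_mult: "pd k (Var i * p) = (if i = k then p else 0) + Var i * pd k p"
proof (rule poly_mapping_eqI)
  fix m
  show "lk (pd k (Var i * p)) m = lk ((if i = k then p else 0) + Var i * pd k p) m"
  proof (cases "i = k")
    case True
    then show ?thesis
      by (auto simp: lookup_pd lookup_add lookup_Var_mult lookup_single lookup_minus when_def sub_add_e sub_add_e' distrib_right)
  next
    case False
    have eq: "m + e k - e i = m - e i + e k" if "1 \<le> lk m i"
      by (rule poly_mapping_eqI) (use that False in \<open>auto simp: lookup_add lookup_single lookup_minus when_def\<close>)
    show ?thesis using False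
      by (auto simp: lookup_pd lookup_add lookup_Var_mult lookup_single lookup_minus when_def eq)
  qed
qed

lemma lookup_const_mult: "lk (Poly_Mapping.single 0 c * p) m = c * lk p m"
  unfolding lookup_mult by (simp add: lookup_single when_mult mult_when)

lemma mon_deg_sum: "finite S \<Longrightarrow> Poly_Mapping.keys m \<subseteq> S \<Longrightarrow> mon_deg m = (\<Sum>i\<in>S. lk m i)"
  unfolding mon_deg_def by (rule sum.mono_neutral_left) (auto simp: in_keys_iff)

lemma euler:
  assumes "p \<in> hom_comp n d"
  shows "(\<Sum>k\<le>n. Var k * pd k p) = of_nat d * p"
proof (rule poly_mapping_eqI)
  fix m
  have od: "(of_nat d :: mpoly) = Poly_Mapping.single 0 (of_nat d)" by simp
  have "lk (\<Sum>k\<le>n. Var k * pd k p) m = (\<Sum>k\<le>n. of_nat (lk m k) * lk p m)"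
    unfolding lookup_sum
  proof (rule sum.cong[OF refl])
    fix k
    have eq: "m - e k + e k = m" if "1 \<le> lk m k"
      by (rule poly_mapping_eqI) (use that in \<open>auto simp: lookup_add lookup_single lookup_minus when_def\<close>)
    show "lk (Var k * pd k p) m = of_nat (lk m k) * lk p m"
      by (auto simp: lookup_Var_mult lookup_pd lookup_minus eq)
  qed
  also have "\<dots> = of_nat d * lk p m"
  proof (cases "lk p m = 0")
    case False
    then have "m \<in> Poly_Mapping.keys p" by (simp add: in_keys_iff)
    with assms have k: "Poly_Mapping.keys m \<subseteq> {0..n}" and dm: "mon_deg m = d"
      unfolding hom_comp_def by auto
    have "mon_deg m = (\<Sum>k\<le>n. lk m k)"
      by (rule mon_deg_sum) (use k in auto)
    then show ?thesis using dm by (simp add: sum_distrib_right[symmetric])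
  qed simp
  finally show "lk (\<Sum>k\<le>n. Var k * pd k p) m = lk (of_nat d * p) m"
    by (simp only: od lookup_const_mult)
qed


lemma hom_iff: "p \<in> hom_comp n d \<longleftrightarrow> (\<forall>m. lk p m \<noteq> 0 \<longrightarrow> Poly_Mapping.keys m \<subseteq> {0..n} \<and> mon_deg m = d)"
  unfolding hom_comp_def by (auto simp: in_keys_iff)

lemma hom_add: "p \<in> hom_comp n d \<Longrightarrow> q \<in> hom_comp n d \<Longrightarrow> p + q \<in> hom_comp n d"
  unfolding hom_iff by (metis add.right_neutral add_0 lookup_add)
lemma hom_diff: "p \<in> hom_comp n d \<Longrightarrow> q \<in> hom_comp n d \<Longrightarrow> p - q \<in> hom_comp n d"
  unfolding hom_iff by (metis diff_zero diff_0 minus_zero lookup_minus)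
lemma hom_uminus: "p \<in> hom_comp n d \<Longrightarrow> - p \<in> hom_comp n d"
  unfolding hom_iff by simp
lemma hom_zero: "0 \<in> hom_comp n d"
  unfolding hom_iff by simp
lemma hom_const: "p \<in> hom_comp n d \<Longrightarrow> Poly_Mapping.single 0 c * p \<in> hom_comp n d"
  unfolding hom_iff by (simp add: lookup_const_mult)
lemma hom_sum: "(\<And>x. x \<in> A \<Longrightarrow> P x \<in> hom_comp n d) \<Longrightarrow> sum P A \<in> hom_comp n d"
  by (induction A rule: infinite_finite_induct) (auto intro: hom_add hom_zero)

lemma hom_pd:
  assumes "p \<in> hom_comp n d" "d \<ge> 1"
  shows "pd k p \<in> hom_comp n (d - 1)"
  unfolding hom_iff
proof (intro allI impI)
  fix m assume "lk (pd k p) m \<noteq> 0"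
  then have "lk p (m + e k) \<noteq> 0" by (simp add: lookup_pd)
  with assms have k: "Poly_Mapping.keys (m + e k) \<subseteq> {0..n}" and dm: "mon_deg (m + e k) = d"
    unfolding hom_iff by auto
  have sub: "Poly_Mapping.keys m \<subseteq> Poly_Mapping.keys (m + e k)"
    by (auto simp: in_keys_iff lookup_add)
  let ?S = "Poly_Mapping.keys m \<union> {k}"
  have "mon_deg (m + e k) = (\<Sum>i\<in>?S. lk (m + e k) i)"
    by (rule mon_deg_sum) (auto simp: in_keys_iff lookup_add lookup_single when_def split: if_splits)
  also have "\<dots> = (\<Sum>i\<in>?S. lk m i) + (\<Sum>i\<in>?S. lk (e k) i)"
    by (simp add: lookup_add sum.distrib)
  also have "(\<Sum>i\<in>?S. lk (e k) i) = 1"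
    by (simp add: lookup_single when_def)
  also have "(\<Sum>i\<in>?S. lk m i) = mon_deg m"
    by (rule mon_deg_sum[symmetric]) auto
  finally show "Poly_Mapping.keys m \<subseteq> {0..n} \<and> mon_deg m = d - 1"
    using dm k sub by auto
qed


definition FF :: "(nat \<Rightarrow> nat \<Rightarrow> mpoly) \<Rightarrow> nat \<Rightarrow> nat \<Rightarrow> mpoly" where
  "FF f i j = (if i < j then f i j else if j < i then - f j i else 0)"

lemma cyc:
  assumes H: "\<forall>i j k. i < j \<and> j < k \<and> k \<le> n \<longrightarrow> Var i * f j k - Var j * f i k + Var k * f i j = 0"
    and "i \<le> n" "j \<le> n" "k \<le> n"
  shows "Var i * FF f j k + Var j * FF f k i + Var k * FF f i j = 0"
  using H[rule_format, of i j k] H[rule_format, of i k j] H[rule_format, of j i k]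
    H[rule_format, of j k i] H[rule_format, of k i j] H[rule_format, of k j i] assms(2-4)
  by (auto simp: FF_def algebra_simps)


theorem theorem3p1:
  fixes n d :: nat and f :: "nat \<Rightarrow> nat \<Rightarrow> mpoly"
  assumes "n \<ge> 1" and "d \<ge> 1"
    and "\<forall>i j. i < j \<and> j \<le> n \<longrightarrow> f i j \<in> hom_comp n d"
  shows "(\<exists>g :: nat \<Rightarrow> mpoly. (\<forall>i\<le>n. g i \<in> hom_comp n (d - 1)) \<and>
            (\<forall>i j. i < j \<and> j \<le> n \<longrightarrow> f i j = Var i * g j - Var j * g i))
         \<longleftrightarrow> (\<forall>i j k. i < j \<and> j < k \<and> k \<le> n \<longrightarrow>
            Var i * f j k - Var j * f i k + Var k * f i j = 0)"
proof
  assume "\<exists>g :: nat \<Rightarrow> mpoly. (\<forall>i\<le>n. g i \<in> hom_comp n (d - 1)) \<and>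
            (\<forall>i j. i < j \<and> j \<le> n \<longrightarrow> f i j = Var i * g j - Var j * g i)"
  then obtain g where g: "\<forall>i j. i < j \<and> j \<le> n \<longrightarrow> f i j = Var i * g j - Var j * g i" by blast
  show "\<forall>i j k. i < j \<and> j < k \<and> k \<le> n \<longrightarrow> Var i * f j k - Var j * f i k + Var k * f i j = 0"
  proof (intro allI impI)
    fix i j k assume a: "i < j \<and> j < k \<and> k \<le> n"
    then have e1: "f j k = Var j * g k - Var k * g j" and e2: "f i k = Var i * g k - Var k * g i"
      and e3: "f i j = Var i * g j - Var j * g i" using g by auto
    show "Var i * f j k - Var j * f i k + Var k * f i j = 0"
      unfolding e1 e2 e3 by (simp add: algebra_simps)
  qed
next
  assume H: "\<forall>i j k. i < j \<and> j < k \<and> k \<le> n \<longrightarrow> Var i * f j k - Var j * f i k + Var k * f i j = 0"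
  define F where "F = FF f"
  define G where "G j = (\<Sum>k\<le>n. pd k (F k j))" for j
  define N where "N = n + d - 1"
  have N0: "N \<noteq> 0" using assms(1,2) unfolding N_def by simp
  have Fanti: "F j i = - F i j" for i j unfolding F_def FF_def by auto
  have Fhom: "F i j \<in> hom_comp n d" if "i \<le> n" "j \<le> n" for i j
    using assms(3) that unfolding F_def FF_def by (auto intro: hom_uminus hom_zero)
  have key: "of_nat N * F i j = Var i * G j - Var j * G i" if ij: "i \<le> n" "j \<le> n" for i j
  proof -
    have "(\<Sum>k\<le>n. pd k (Var i * F j k + Var j * F k i + Var k * F i j)) = 0"
      using cyc[OF H ij] unfolding F_def by (simp add: pd_zero)
    moreover have "(\<Sum>k\<le>n. pd k (Var i * F j k + Var j * F k i + Var k * F i j)) =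
      (\<Sum>k\<le>n. (if i = k then F j k else 0)) + (\<Sum>k\<le>n. Var i * pd k (F j k))
      + (\<Sum>k\<le>n. (if j = k then F k i else 0)) + (\<Sum>k\<le>n. Var j * pd k (F k i))
      + (\<Sum>k\<le>n. F i j) + (\<Sum>k\<le>n. Var k * pd k (F i j))"
    proof -
      have "pd k (Var i * F j k + Var j * F k i + Var k * F i j) =
        ((if i = k then F j k else 0) + Var i * pd k (F j k))
        + ((if j = k then F k i else 0) + Var j * pd k (F k i))
        + (F i j + Var k * pd k (F i j))" for k
        by (simp only: pd_add pd_Var_mult) simp
      then show ?thesis by (simp only: sum.distrib add.assoc)
    qed
    moreover have "(\<Sum>k\<le>n. (if i = k then F j k else 0)) = F j i" using ij by simp
    moreover have "(\<Sum>k\<le>n. (if j = k then F k i else 0)) = F j i" using ij by simp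
    moreover have "(\<Sum>k\<le>n. Var i * pd k (F j k)) = - (Var i * G j)"
      unfolding G_def sum_distrib_left[symmetric] by (simp add: Fanti[of _ j] pd_uminus sum_negf)
    moreover have "(\<Sum>k\<le>n. Var j * pd k (F k i)) = Var j * G i"
      unfolding G_def sum_distrib_left[symmetric] ..
    moreover have "(\<Sum>k\<le>n. F i j) = of_nat (n + 1) * F i j" by simp
    moreover have "(\<Sum>k\<le>n. Var k * pd k (F i j)) = of_nat d * F i j"
      by (rule euler[OF Fhom[OF ij]])
    ultimately have E: "F j i + - (Var i * G j) + F j i + Var j * G i + of_nat (n + 1) * F i j + of_nat d * F i j = 0"
      by simp
    have Nn: "(of_nat N :: mpoly) + 1 + 1 = of_nat (n + 1) + of_nat d"
    proof -
      have "N + 2 = (n + 1) + d" using assms(1,2) unfolding N_def by simp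
      then have "(of_nat (N + 2) :: mpoly) = of_nat ((n + 1) + d)" by simp
      then show ?thesis by (simp only: of_nat_add) simp
    qed
    have "of_nat N * F i j = (of_nat N + 1 + 1) * F i j - F i j - F i j" by (simp add: algebra_simps)
    also have "\<dots> = (of_nat (n + 1) + of_nat d) * F i j - F i j - F i j" by (simp only: Nn)
    also have "\<dots> = Var i * G j - Var j * G i"
    proof -
      have "(of_nat (n + 1) + of_nat d) * F i j - F i j - F i j - (Var i * G j - Var j * G i)
        = F j i + - (Var i * G j) + F j i + Var j * G i + of_nat (n + 1) * F i j + of_nat d * F i j"
        unfolding Fanti[of i j] by (simp add: algebra_simps)
      with E show ?thesis by simp
    qed
    finally show ?thesis .
  qed
  define g where "g j = Poly_Mapping.single 0 (1 / of_nat N) * G j" for j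
  show "\<exists>g :: nat \<Rightarrow> mpoly. (\<forall>i\<le>n. g i \<in> hom_comp n (d - 1)) \<and>
            (\<forall>i j. i < j \<and> j \<le> n \<longrightarrow> f i j = Var i * g j - Var j * g i)"
  proof (intro exI conjI allI impI)
    fix i assume "i \<le> n"
    show "g i \<in> hom_comp n (d - 1)"
      unfolding g_def G_def using Fhom assms(2) \<open>i \<le> n\<close>
      by (intro hom_const hom_sum hom_pd) auto
  next
    fix i j assume a: "i < j \<and> j \<le> n"
    have c: "Poly_Mapping.single 0 (1 / of_nat N) * (of_nat N :: mpoly) = 1"
    proof -
      have "(of_nat N :: mpoly) = Poly_Mapping.single 0 (of_nat N)" by simp
      then show ?thesis using N0 by (simp only: mult_single) simp
    qed
    have "Var i * g j - Var j * g i = Poly_Mapping.single 0 (1 / of_nat N) * (Var i * G j - Var j * G i)"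
      unfolding g_def by (simp add: algebra_simps)
    also have "\<dots> = Poly_Mapping.single 0 (1 / of_nat N) * (of_nat N * F i j)"
      using key a by simp
    also have "\<dots> = F i j" by (simp add: mult.assoc[symmetric] c)
    also have "\<dots> = f i j" using a unfolding F_def FF_def by simp
    finally show "f i j = Var i * g j - Var j * g i" ..
  qed
qed

end
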